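(* Let $\mathcal{X}$ be a finite set and $\underline{Q}$ a lower transition rate operator on $\mathcal{L}(\mathcal{X})$. Then for all $f\in\mathcal{L}(\mathcal{X})$, $x\in\mathcal{X}$ and $t,s>0$: $\underline{T}_tf(x)>\min f$ if and only if $\underline{T}_sf(x)>\min f$.
   Context: $\mathcal{L}(\mathcal{X})$ is the set of real-valued functions on $\mathcal{X}$ with pointwise operations and order, real constants identified with constant functions, $\mathbb{I}_y$ the indicator of $\{y\}$. A lower transition rate operator is a map $\underline{Q}\colon\mathcal{L}(\mathcal{X})\to\mathcal{L}(\mathcal{X})$ such that for all $f,g$, $\lambda\ge0$, $\mu\in\mathbb{R}$, $x,y\in\mathcal{X}$: $\underline{Q}(\mu)=0$; $\underline{Q}(f+g)\ge\underline{Q}f+\underline{Q}g$; $\underline{Q}(\lambda f)=\lambda\underline{Q}f$; $x\ne y\Rightarrow\underline{Q}(\mathbb{I}_y)(x)\ge0$. For each $f$, $t\mapsto\underline{T}_tf$ is the unique solution on $[0,\infty)$ of $\frac{d}{dt}\underline{T}_tf=\underline{Q}\,\underline{T}_tf$ with $\underline{T}_0f=f$ (existence and uniqueness are known). *)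

theory Defs
  imports "HOL-Analysis.Analysis"
begin

definition lower_transition_rate_operator :: "(('x \<Rightarrow> real) \<Rightarrow> ('x \<Rightarrow> real)) \<Rightarrow> bool" where
  "lower_transition_rate_operator Q \<longleftrightarrow>
     (\<forall>\<mu>::real. Q (\<lambda>_. \<mu>) = (\<lambda>_. 0)) \<and>
     (\<forall>f g x. Q (\<lambda>z. f z + g z) x \<ge> Q f x + Q g x) \<and>
     (\<forall>f (c::real) x. c \<ge> 0 \<longrightarrow> Q (\<lambda>z. c * f z) x = c * Q f x) \<and>
     (\<forall>x y. x \<noteq> y \<longrightarrow> Q (\<lambda>z. if z = y then 1 else 0) x \<ge> 0)"

text \<open>T solves the ODE d/dt T_t f = Q (T_t f), T_0 f = f on [0,\<infinity>) (one-sided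
  derivative at 0), componentwise (equivalent to the vector ODE since 'x is finite).\<close>

definition is_lower_transition_semigroup ::
  "(('x \<Rightarrow> real) \<Rightarrow> ('x \<Rightarrow> real)) \<Rightarrow> (real \<Rightarrow> ('x \<Rightarrow> real) \<Rightarrow> ('x \<Rightarrow> real)) \<Rightarrow> bool" where
  "is_lower_transition_semigroup Q T \<longleftrightarrow>
     (\<forall>f. T 0 f = f \<and>
        (\<forall>t\<ge>0. \<forall>x. ((\<lambda>s. T s f x) has_real_derivative Q (T t f) x) (at t within {0..})))"

end

theory Submission
  imports Defs
begin

lemma crossing:
  fixes F D :: "real \<Rightarrow> 'x::finite \<Rightarrow> real" and A :: "'x set" and a :: real
  assumes der: "\<forall>r\<ge>a. \<forall>z\<in>A. ((\<lambda>r. F r z) has_real_derivative D r z) (at r within {a..})"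
    and init: "\<forall>z\<in>A. F a z < 0"
    and step: "\<forall>r>a. \<forall>z\<in>A. F r z = 0 \<longrightarrow> (\<forall>z'\<in>A. F r z' \<le> 0) \<longrightarrow> D r z < 0"
  shows "\<forall>r\<ge>a. \<forall>z\<in>A. F r z < 0"
proof (rule ccontr)
  assume "\<not> ?thesis"
  then obtain r0 z0 where r0: "r0 \<ge> a" "z0 \<in> A" "F r0 z0 \<ge> 0" by force
  have cont: "continuous_on {a..} (\<lambda>r. F r z)" if "z \<in> A" for z
    unfolding continuous_on_eq_continuous_within
  proof
    fix r assume "r \<in> {a..}"
    then show "continuous (at r within {a..}) (\<lambda>r. F r z)"
      using der that by (intro DERIV_continuous) auto
  qed
  define B where "B = (\<Union>z\<in>A. {r \<in> {a..}. (\<lambda>r. 0) r \<le> (\<lambda>r. F r z) r})"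
  have clz: "closed {r \<in> {a..}. (\<lambda>r. 0) r \<le> (\<lambda>r. F r z) r}" if "z \<in> A" for z
    by (rule continuous_on_closed_Collect_le[OF continuous_on_const cont[OF that] closed_atLeast])
  have clB: "closed B" unfolding B_def
    using clz by (intro closed_UN) (auto intro: finite)
  have neB: "B \<noteq> {}" using r0 unfolding B_def by auto
  have bdd: "bdd_below B" unfolding B_def by (rule bdd_belowI[of _ a]) auto
  define \<tau> where "\<tau> = Inf B"
  have tB: "\<tau> \<in> B" using closed_contains_Inf[OF neB bdd clB] \<tau>_def by simp
  then obtain z where z: "z \<in> A" "F \<tau> z \<ge> 0" "\<tau> \<ge> a" unfolding B_def by auto
  have before: "F r z' < 0" if "a \<le> r" "r < \<tau>" "z' \<in> A" for r z'
  proof (rule ccontr)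
    assume "\<not> F r z' < 0"
    then have "0 \<le> F r z'" by simp
    then have "r \<in> B" using that unfolding B_def by auto
    then have "\<tau> \<le> r" unfolding \<tau>_def using bdd by (rule cInf_lower)
    then show False using that by simp
  qed
  have ta: "\<tau> > a" using z init by (cases "\<tau> = a") auto
  have le0: "F \<tau> z' \<le> 0" if "z' \<in> A" for z'
  proof (rule ccontr)
    assume "\<not> F \<tau> z' \<le> 0"
    moreover have "continuous_on {a..\<tau>} (\<lambda>r. F r z')"
      using cont[OF that] by (rule continuous_on_subset) auto
    moreover have "F a z' \<le> 0" using init that by auto
    moreover have "a \<le> \<tau>" using ta by simp
    ultimately obtain r where "r \<ge> a" "r \<le> \<tau>" "F r z' = 0"
      using IVT'[of "\<lambda>r. F r z'" a 0 \<tau>] by auto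
    then show False using before[of r z'] that \<open>\<not> F \<tau> z' \<le> 0\<close>
      by (cases "r = \<tau>") auto
  qed
  have eq: "F \<tau> z = 0" using le0[OF z(1)] z(2) by simp
  have "D \<tau> z < 0" using step ta z(1) eq le0 by blast
  then obtain d where d: "d > 0" "\<forall>h>0. \<tau> - h \<in> {a..} \<longrightarrow> h < d \<longrightarrow> F \<tau> z < F (\<tau> - h) z"
    using has_real_derivative_neg_dec_left[OF der[rule_format, OF z(3) z(1)]] by blast
  define h where "h = min (d/2) ((\<tau> - a)/2)"
  have "h > 0" "h < d" "\<tau> - h \<ge> a" "\<tau> - h < \<tau>" using d(1) ta unfolding h_def by (auto simp: min_def field_simps)
  then have "F \<tau> z < F (\<tau> - h) z" using d by auto
  moreover have "F (\<tau> - h) z < 0" using before \<open>\<tau> - h \<ge> a\<close> \<open>\<tau> - h < \<tau>\<close> z(1) by blast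
  ultimately show False using eq by simp
qed


context
  fixes Q :: "('x::finite \<Rightarrow> real) \<Rightarrow> ('x \<Rightarrow> real)"
  assumes LQ: "lower_transition_rate_operator Q"
begin

lemma Q_const: "Q (\<lambda>_. c) = (\<lambda>_. 0)"
  using LQ unfolding lower_transition_rate_operator_def by blast

lemma Q_super: "Q (\<lambda>z. f z + g z) x \<ge> Q f x + Q g x"
  using LQ unfolding lower_transition_rate_operator_def by blast

lemma Q_hom: "c \<ge> 0 \<Longrightarrow> Q (\<lambda>z. c * f z) x = c * Q f x"
  using LQ unfolding lower_transition_rate_operator_def by blast

lemma Q_off: "x \<noteq> y \<Longrightarrow> Q (\<lambda>z. if z = y then 1 else 0) x \<ge> 0"
  using LQ unfolding lower_transition_rate_operator_def by blast

lemma Q_transl: "Q (\<lambda>z. g z + c) = Q g"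
proof
  fix x
  have "Q (\<lambda>z. g z + c) x \<ge> Q g x + Q (\<lambda>_. c) x" by (rule Q_super)
  then have 1: "Q (\<lambda>z. g z + c) x \<ge> Q g x" by (simp add: Q_const)
  have "Q (\<lambda>z. (g z + c) + (-c)) x \<ge> Q (\<lambda>z. g z + c) x + Q (\<lambda>_. -c) x" by (rule Q_super)
  then have 2: "Q g x \<ge> Q (\<lambda>z. g z + c) x" by (simp add: Q_const)
  from 1 2 show "Q (\<lambda>z. g z + c) x = Q g x" by simp
qed

lemma Q_sum:
  assumes "finite S" "\<forall>y. h y \<ge> 0"
  shows "Q (\<lambda>z. \<Sum>y\<in>S. h y * (if z = y then 1 else 0)) x
         \<ge> (\<Sum>y\<in>S. h y * Q (\<lambda>z. if z = y then 1 else 0) x)"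
  using assms(1)
proof (induction S rule: finite_induct)
  case empty
  then show ?case using Q_const[of 0] by simp
next
  case (insert y S)
  have "Q (\<lambda>z. h y * (if z = y then 1 else 0) + (\<Sum>y\<in>S. h y * (if z = y then 1 else 0))) x
     \<ge> Q (\<lambda>z. h y * (if z = y then 1 else 0)) x + Q (\<lambda>z. \<Sum>y\<in>S. h y * (if z = y then 1 else 0)) x"
    by (rule Q_super)
  moreover have "Q (\<lambda>z. h y * (if z = y then 1 else 0)) x = h y * Q (\<lambda>z. if z = y then 1 else 0) x"
    using assms(2) by (intro Q_hom) auto
  ultimately show ?case using insert by simp
qed

lemma Q_nonneg_zero:
  assumes "\<forall>y. h y \<ge> 0" "h x = 0"
  shows "Q h x \<ge> 0"
proof -
  have h: "h = (\<lambda>z. \<Sum>y\<in>-{x}. h y * (if z = y then 1 else 0))"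
  proof
    fix z
    show "h z = (\<Sum>y\<in>-{x}. h y * (if z = y then 1 else 0))"
    proof (cases "z = x")
      case True then show ?thesis using assms by simp
    next
      case False
      have "(\<Sum>y\<in>-{x}. h y * (if z = y then 1 else 0)) = (\<Sum>y\<in>-{x}. if y = z then h z else 0)"
        by (rule sum.cong) auto
      also have "\<dots> = h z" using False by (subst sum.delta) auto
      finally show ?thesis by simp
    qed
  qed
  have "Q h x \<ge> (\<Sum>y\<in>-{x}. h y * Q (\<lambda>z. if z = y then 1 else 0) x)"
    by (subst h, rule Q_sum) (use assms in auto)
  moreover have "(\<Sum>y\<in>-{x}. h y * Q (\<lambda>z. if z = y then 1 else 0) x) \<ge> 0"
    using assms(1) Q_off by (intro sum_nonneg) auto
  ultimately show ?thesis by linarith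
qed

lemma Q_nonneg_diag:
  assumes "\<forall>y. h y \<ge> 0"
  shows "Q h x \<ge> h x * Q (\<lambda>z. if z = x then 1 else 0) x"
proof -
  have "Q (\<lambda>z. (h z - h x * (if z = x then 1 else 0)) + h x * (if z = x then 1 else 0)) x
     \<ge> Q (\<lambda>z. h z - h x * (if z = x then 1 else 0)) x + Q (\<lambda>z. h x * (if z = x then 1 else 0)) x"
    by (rule Q_super)
  moreover have "Q (\<lambda>z. h z - h x * (if z = x then 1 else 0)) x \<ge> 0"
    using assms by (intro Q_nonneg_zero) auto
  moreover have "Q (\<lambda>z. h x * (if z = x then 1 else 0)) x = h x * Q (\<lambda>z. if z = x then 1 else 0) x"
    using assms by (intro Q_hom) auto
  ultimately show ?thesis by simp
qed

end


context
  fixes Q :: "('x::finite \<Rightarrow> real) \<Rightarrow> ('x \<Rightarrow> real)"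
    and T :: "real \<Rightarrow> ('x \<Rightarrow> real) \<Rightarrow> ('x \<Rightarrow> real)"
    and f :: "'x \<Rightarrow> real" and m :: real
  assumes LQ: "lower_transition_rate_operator Q"
    and ST: "is_lower_transition_semigroup Q T"
    and mf: "\<forall>z. m \<le> f z"
begin

lemma DT: "r \<ge> 0 \<Longrightarrow> ((\<lambda>s. T s f z) has_real_derivative Q (T r f) z) (at r within {0..})"
  using ST unfolding is_lower_transition_semigroup_def by blast

lemma DTa: "a \<ge> 0 \<Longrightarrow> r \<ge> a \<Longrightarrow> ((\<lambda>s. T s f z) has_real_derivative Q (T r f) z) (at r within {a..})"
  by (rule DERIV_subset[OF DT]) auto

lemma T0: "T 0 f = f"
  using ST unfolding is_lower_transition_semigroup_def by blast

lemma QT_transl: "Q (\<lambda>y. T r f y + c) = Q (T r f)"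
  using Q_transl[OF LQ, of "T r f" c] by simp

lemma lower_bound: "\<forall>r\<ge>0. \<forall>z. T r f z \<ge> m"
proof (intro allI impI)
  fix r :: real and z assume r: "r \<ge> 0"
  show "T r f z \<ge> m"
  proof (rule ccontr)
    assume neg: "\<not> T r f z \<ge> m"
    define \<epsilon> where "\<epsilon> = (m - T r f z) / (1 + r)"
    have ep: "\<epsilon> > 0" using neg r unfolding \<epsilon>_def by auto
    have "\<forall>r\<ge>0. \<forall>z\<in>UNIV. (\<lambda>r z. -(T r f z - m + \<epsilon> * (1 + r))) r z < 0"
    proof (rule crossing[where D = "\<lambda>r z. -(Q (T r f) z + \<epsilon>)"])
      show "\<forall>r\<ge>0. \<forall>z\<in>UNIV. ((\<lambda>r. -(T r f z - m + \<epsilon> * (1 + r))) has_real_derivative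
              -(Q (T r f) z + \<epsilon>)) (at r within {0..})"
        by (auto intro!: derivative_eq_intros DT)
      show "\<forall>z\<in>UNIV. -(T 0 f z - m + \<epsilon> * (1 + 0)) < 0"
      proof
        fix z :: 'x
        have "f z \<ge> m" using mf by blast
        then show "-(T 0 f z - m + \<epsilon> * (1 + 0)) < 0" using ep T0 by simp
      qed
      show "\<forall>r>0. \<forall>z\<in>UNIV. -(T r f z - m + \<epsilon> * (1 + r)) = 0 \<longrightarrow>
              (\<forall>z'\<in>UNIV. -(T r f z' - m + \<epsilon> * (1 + r)) \<le> 0) \<longrightarrow> -(Q (T r f) z + \<epsilon>) < 0"
      proof (intro allI impI ballI)
        fix r :: real and z
        assume h1: "-(T r f z - m + \<epsilon> * (1 + r)) = 0"
          and h2: "\<forall>z'\<in>UNIV. -(T r f z' - m + \<epsilon> * (1 + r)) \<le> 0"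
        have n1: "\<forall>y. T r f y + (- m + \<epsilon> * (1 + r)) \<ge> 0"
        proof
          fix y show "T r f y + (- m + \<epsilon> * (1 + r)) \<ge> 0" using h2 by (simp add: algebra_simps)
        qed
        have n2: "T r f z + (- m + \<epsilon> * (1 + r)) = 0" using h1 by (simp add: algebra_simps)
        have "Q (\<lambda>y. T r f y + (- m + \<epsilon> * (1 + r))) z \<ge> 0"
          by (rule Q_nonneg_zero[OF LQ n1 n2])
        then have "Q (T r f) z \<ge> 0" using QT_transl by simp
        then show "-(Q (T r f) z + \<epsilon>) < 0" using ep by simp
      qed
    qed
    then have "-(T r f z - m + \<epsilon> * (1 + r)) < 0" using r by blast
    then show False unfolding \<epsilon>_def using r by (simp add: field_simps)
  qed
qed

lemma pos_persist:
  assumes t0: "t0 \<ge> 0" and pos: "T t0 f x > m" and r: "r \<ge> t0"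
  shows "T r f x > m"
proof -
  define \<delta> where "\<delta> = (T t0 f x - m) / 2"
  define K where "K = 1 - Q (\<lambda>z. if z = x then 1 else 0) x"
  have dp: "\<delta> > 0" using pos unfolding \<delta>_def by simp
  have "\<forall>r\<ge>t0. \<forall>z\<in>{x}. (\<lambda>r z. \<delta> * exp (-K * (r - t0)) - (T r f z - m)) r z < 0"
  proof (rule crossing[where D = "\<lambda>r z. \<delta> * (exp (-K * (r - t0)) * (-K)) - Q (T r f) z"])
    show "\<forall>r\<ge>t0. \<forall>z\<in>{x}. ((\<lambda>r. \<delta> * exp (-K * (r - t0)) - (T r f z - m)) has_real_derivative
            \<delta> * (exp (-K * (r - t0)) * (-K)) - Q (T r f) z) (at r within {t0..})"
      using t0 by (auto intro!: derivative_eq_intros DTa)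
    show "\<forall>z\<in>{x}. \<delta> * exp (-K * (t0 - t0)) - (T t0 f z - m) < 0"
      using dp unfolding \<delta>_def by simp
    show "\<forall>r>t0. \<forall>z\<in>{x}. \<delta> * exp (-K * (r - t0)) - (T r f z - m) = 0 \<longrightarrow>
            (\<forall>z'\<in>{x}. \<delta> * exp (-K * (r - t0)) - (T r f z' - m) \<le> 0) \<longrightarrow>
            \<delta> * (exp (-K * (r - t0)) * (-K)) - Q (T r f) z < 0"
    proof (intro allI impI ballI)
      fix r :: real and z assume rt: "r > t0" and zx: "z \<in> {x}"
        and eq: "\<delta> * exp (-K * (r - t0)) - (T r f z - m) = 0"
      have z: "z = x" using zx by simp
      have nn: "\<forall>y. T r f y + - m \<ge> 0" using lower_bound rt t0 by auto
      have "Q (\<lambda>y. T r f y + - m) x \<ge> (T r f x + - m) * Q (\<lambda>z. if z = x then 1 else 0) x"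
        by (rule Q_nonneg_diag[OF LQ nn])
      then have q: "Q (T r f) x \<ge> (T r f x - m) * (1 - K)" using QT_transl[of r "- m"] unfolding K_def by simp
      define e where "e = \<delta> * exp (-K * (r - t0))"
      have ep: "e > 0" using dp unfolding e_def by simp
      have "T r f x - m = e" using eq z unfolding e_def by simp
      then have "Q (T r f) x \<ge> e * (1 - K)" using q by simp
      then have "e * (-K) - Q (T r f) x < 0" using ep by (simp add: algebra_simps)
      then show "\<delta> * (exp (-K * (r - t0)) * (-K)) - Q (T r f) z < 0"
        using z unfolding e_def by (simp add: mult.assoc)
    qed
  qed
  then have "\<delta> * exp (-K * (r - t0)) - (T r f x - m) < 0" using r by blast
  moreover have "\<delta> * exp (-K * (r - t0)) > 0" using dp by simp
  ultimately show ?thesis by simp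
qed


lemma zero_persist:
  assumes t0: "t0 > 0" and zx: "T t0 f x \<le> m" and r: "r \<ge> t0"
  shows "T r f x \<le> m"
proof (rule ccontr)
  assume neg: "\<not> T r f x \<le> m"
  define Z where "Z = {z. T t0 f z \<le> m}"
  define u where "u = (\<lambda>y. T t0 f y - m)"
  have lb: "\<And>r y. r \<ge> 0 \<Longrightarrow> T r f y \<ge> m" using lower_bound by blast
  have uZ: "u z = 0" if "z \<in> Z" for z using that lb[of t0 z] t0 unfolding Z_def u_def by simp
  have uS: "u y > 0" if "y \<notin> Z" for y using that unfolding Z_def u_def by simp
  have Q0: "Q (T t0 f) z \<le> 0" if zZ: "z \<in> Z" for z
  proof (rule ccontr)
    assume "\<not> Q (T t0 f) z \<le> 0"
    then obtain d where d: "d > 0" "\<forall>h>0. t0 - h \<in> {0..} \<longrightarrow> h < d \<longrightarrow> T (t0 - h) f z < T t0 f z"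
      using has_real_derivative_pos_inc_left[OF DT[of t0 z]] t0 by force
    define h where "h = min (d/2) (t0/2)"
    have "h > 0" "h < d" "t0 - h \<ge> 0" using d(1) t0 unfolding h_def by (auto simp: min_def field_simps)
    then have "T (t0 - h) f z < T t0 f z" using d by auto
    moreover have "T (t0 - h) f z \<ge> m" using lb \<open>t0 - h \<ge> 0\<close> by blast
    ultimately show False using zZ unfolding Z_def by simp
  qed
  define \<epsilon> where "\<epsilon> = (T r f x - m) / exp (r - t0)"
  have ep: "\<epsilon> > 0" using neg unfolding \<epsilon>_def by simp
  have "\<forall>r\<ge>t0. \<forall>z\<in>Z. (\<lambda>r z. T r f z - m - \<epsilon> * exp (r - t0)) r z < 0"
  proof (rule crossing[where D = "\<lambda>r z. Q (T r f) z - \<epsilon> * exp (r - t0)"])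
    show "\<forall>r\<ge>t0. \<forall>z\<in>Z. ((\<lambda>r. T r f z - m - \<epsilon> * exp (r - t0)) has_real_derivative
            Q (T r f) z - \<epsilon> * exp (r - t0)) (at r within {t0..})"
      using t0 by (auto intro!: derivative_eq_intros DTa)
    show "\<forall>z\<in>Z. T t0 f z - m - \<epsilon> * exp (t0 - t0) < 0"
      using ep unfolding Z_def by simp
    show "\<forall>r>t0. \<forall>z\<in>Z. T r f z - m - \<epsilon> * exp (r - t0) = 0 \<longrightarrow>
            (\<forall>z'\<in>Z. T r f z' - m - \<epsilon> * exp (r - t0) \<le> 0) \<longrightarrow>
            Q (T r f) z - \<epsilon> * exp (r - t0) < 0"
    proof (intro allI impI ballI)
      fix r :: real and z assume rt: "r > t0" and zZ: "z \<in> Z"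
        and eq: "T r f z - m - \<epsilon> * exp (r - t0) = 0"
        and le: "\<forall>z'\<in>Z. T r f z' - m - \<epsilon> * exp (r - t0) \<le> 0"
      define e where "e = \<epsilon> * exp (r - t0)"
      have ep': "e > 0" using ep unfolding e_def by simp
      define v where "v = (\<lambda>y. T r f y - m)"
      have vnn: "v y \<ge> 0" for y using lb[of r y] rt t0 unfolding v_def by simp
      define a where "a = (\<lambda>y. if y \<in> Z then 0 else v y)"
      define b where "b = (\<lambda>y. if y \<in> Z then v y else 0)"
      have "Q (\<lambda>y. v y + (- b y)) z \<ge> Q v z + Q (\<lambda>y. - b y) z" by (rule Q_super[OF LQ])
      moreover have "(\<lambda>y. v y + (- b y)) = a" unfolding a_def b_def by auto
      ultimately have 1: "Q v z \<le> Q a z - Q (\<lambda>y. - b y) z" by simp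
      have "Q (\<lambda>y. (e - b y) + (- e)) z \<ge> 0"
        unfolding Q_transl[OF LQ]
        using le eq ep' vnn unfolding b_def e_def v_def
        by (intro Q_nonneg_zero[OF LQ]) (auto simp: zZ)
      then have 2: "Q (\<lambda>y. - b y) z \<ge> 0" by simp
      define c where "c = (\<Sum>y\<in>-Z. v y / u y)"
      have cnn: "c \<ge> 0" unfolding c_def using vnn uS by (intro sum_nonneg divide_nonneg_pos) auto
      have aC: "a y \<le> c * u y" for y
      proof (cases "y \<in> Z")
        case True then show ?thesis using uZ unfolding a_def by simp
      next
        case False
        have "v y / u y \<le> c" unfolding c_def
          using False vnn uS by (intro member_le_sum divide_nonneg_pos) auto
        then have "v y / u y * u y \<le> c * u y" using uS[OF False] by (intro mult_right_mono) auto
        then show ?thesis using False uS[OF False] unfolding a_def by simp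
      qed
      define g where "g = (\<lambda>y. c * u y - a y)"
      have s1: "Q (\<lambda>y. a y + g y) z \<ge> Q a z + Q g z" by (rule Q_super[OF LQ])
      have s2: "(\<lambda>y. a y + g y) = (\<lambda>y. c * u y)" unfolding g_def by auto
      have "Q (\<lambda>y. c * u y) z \<ge> Q a z + Q g z" using s1 unfolding s2 .
      moreover have "Q g z \<ge> 0" using aC uZ[OF zZ] zZ unfolding g_def a_def
        by (intro Q_nonneg_zero[OF LQ]) auto
      moreover have "Q (\<lambda>y. c * u y) z \<le> 0"
      proof -
        have "Q (\<lambda>y. c * u y) z = c * Q u z" using cnn by (rule Q_hom[OF LQ])
        moreover have "Q u z = Q (T t0 f) z" unfolding u_def using QT_transl[of t0 "-m"] by simp
        moreover have "c * Q (T t0 f) z \<le> 0" using cnn Q0[OF zZ] by (simp add: mult_nonneg_nonpos)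
        ultimately show ?thesis by simp
      qed
      ultimately have 3: "Q a z \<le> 0" by linarith
      have "Q v z = Q (T r f) z" unfolding v_def using QT_transl[of r "-m"] by simp
      then have "Q (T r f) z \<le> 0" using 1 2 3 by linarith
      then show "Q (T r f) z - \<epsilon> * exp (r - t0) < 0" using ep' unfolding e_def by simp
    qed
  qed
  moreover have "x \<in> Z" using zx unfolding Z_def by simp
  ultimately have "T r f x - m - \<epsilon> * exp (r - t0) < 0" using r by blast
  then show False unfolding \<epsilon>_def by simp
qed

end

theorem lemma7:
  fixes Q :: "('x::finite \<Rightarrow> real) \<Rightarrow> ('x \<Rightarrow> real)"
    and T :: "real \<Rightarrow> ('x \<Rightarrow> real) \<Rightarrow> ('x \<Rightarrow> real)"
    and f :: "'x \<Rightarrow> real" and x :: 'x and t s :: real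
  assumes "lower_transition_rate_operator Q"
    and "is_lower_transition_semigroup Q T"
    and "t > 0" and "s > 0"
  shows "T t f x > Min (range f) \<longleftrightarrow> T s f x > Min (range f)"
proof -
  have mf: "\<forall>z. Min (range f) \<le> f z" by simp
  have dir: "T a f x > Min (range f) \<Longrightarrow> T b f x > Min (range f)" if "a > 0" "b > 0" for a b
  proof -
    assume A: "T a f x > Min (range f)"
    show ?thesis
    proof (cases "a \<le> b")
      case True
      then show ?thesis using pos_persist[OF assms(1,2) mf, of a x b] A that by simp
    next
      case False
      show ?thesis
      proof (rule ccontr)
        assume "\<not> ?thesis"
        then have "T b f x \<le> Min (range f)" by linarith
        then have "T a f x \<le> Min (range f)"
          using zero_persist[OF assms(1,2) mf that(2), of x a] False by linarith
        then show False using A by linarith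
      qed
    qed
  qed
  show ?thesis using dir assms(3,4) by blast
qed

end
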